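(* Let $\mathbf{H}$ be a finite commutative semihypergroup with states $e_1,\dots,e_n$ that is derived from a group. Then any two columns $a_{i,j}$ and $a_{k,l}$ ($1\le i,j,k,l\le n$) are rearrangements of each other, i.e. they have the same multiset of entries. In particular the cube $C=(a_{i,j}(k))_{i,j,k}$ has at most $n$ distinct entries.
   Context: A finite commutative semihypergroup $\mathbf{H}$ with $n$ states $e_1,\dots,e_n$ is given by a convolution $e_i*e_j=\sum_{k=1}^n a_{i,j}(k)e_k$ ($i,j=1,\dots,n$), extended bilinearly, where $a_{i,j}(k)\ge 0$, $\sum_{k=1}^n a_{i,j}(k)=1$ for all $i,j$, the convolution is associative and commutative ($a_{i,j}(k)=a_{j,i}(k)$). Let $a_{i,j}\in\mathbb{R}^n$ denote the column vector $(a_{i,j}(1),\dots,a_{i,j}(n))^T$; let $A_i$ be the $n\times n$ matrix with columns $a_{i,1},\dots,a_{i,n}$ and $B_i$ the matrix with columns $a_{1,i},\dots,a_{n,i}$. $\mathbf{H}$ is called derived from a group if it satisfies condition (A): the set $\{a_{i,j}: 1\le i,j\le n\}$ contains exactly $n$ distinct vectors, and for each $i$ the columns of $A_i$ are linearly independent and the columns of $B_i$ are linearly independent. *)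

theory Defs
  imports Main "HOL-Library.Multiset" Complex_Main
begin

text \<open>States are indexed by 1..n; the structure constants are a i j k = a_{i,j}(k).\<close>

definition comm_semihypergroup :: "nat \<Rightarrow> (nat \<Rightarrow> nat \<Rightarrow> nat \<Rightarrow> real) \<Rightarrow> bool" where
  "comm_semihypergroup n a \<longleftrightarrow>
     (\<forall>i\<in>{1..n}. \<forall>j\<in>{1..n}. \<forall>k\<in>{1..n}. a i j k \<ge> 0) \<and>
     (\<forall>i\<in>{1..n}. \<forall>j\<in>{1..n}. (\<Sum>k=1..n. a i j k) = 1) \<and>
     (\<forall>i\<in>{1..n}. \<forall>j\<in>{1..n}. \<forall>k\<in>{1..n}. a i j k = a j i k) \<and>
     (\<forall>i\<in>{1..n}. \<forall>j\<in>{1..n}. \<forall>l\<in>{1..n}. \<forall>k\<in>{1..n}.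
        (\<Sum>m=1..n. a i j m * a m l k) = (\<Sum>m=1..n. a j l m * a i m k))"

definition col :: "nat \<Rightarrow> (nat \<Rightarrow> nat \<Rightarrow> nat \<Rightarrow> real) \<Rightarrow> nat \<Rightarrow> nat \<Rightarrow> (nat \<Rightarrow> real)" where
  "col n a i j = (\<lambda>k. if k \<in> {1..n} then a i j k else 0)"

definition lin_indep_family :: "nat \<Rightarrow> (nat \<Rightarrow> nat \<Rightarrow> real) \<Rightarrow> bool" where
  "lin_indep_family n v \<longleftrightarrow>
     (\<forall>c :: nat \<Rightarrow> real. (\<forall>k\<in>{1..n}. (\<Sum>j=1..n. c j * v j k) = 0) \<longrightarrow> (\<forall>j\<in>{1..n}. c j = 0))"

definition derived_from_group :: "nat \<Rightarrow> (nat \<Rightarrow> nat \<Rightarrow> nat \<Rightarrow> real) \<Rightarrow> bool" where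
  "derived_from_group n a \<longleftrightarrow>
     card {col n a i j | i j. i \<in> {1..n} \<and> j \<in> {1..n}} = n \<and>
     (\<forall>i\<in>{1..n}. lin_indep_family n (\<lambda>j k. a i j k)) \<and>
     (\<forall>i\<in>{1..n}. lin_indep_family n (\<lambda>j k. a j i k))"

end

theory Submission
  imports Defs
begin

lemma col_inj:
  assumes li: "lin_indep_family n (\<lambda>j k. a i j k)"
  shows "inj_on (col n a i) {1..n}"
proof (rule inj_onI, rule ccontr)
  fix j j' assume j: "j \<in> {1..n}" and j': "j' \<in> {1..n}"
    and eq: "col n a i j = col n a i j'" and ne: "j \<noteq> j'"
  define c :: "nat \<Rightarrow> real" where "c = (\<lambda>t. if t = j then 1 else if t = j' then -1 else 0)"
  have "\<forall>k\<in>{1..n}. (\<Sum>t=1..n. c t * a i t k) = 0"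
  proof
    fix k assume k: "k \<in> {1..n}"
    have ak: "a i j k = a i j' k" using eq k unfolding col_def by (metis (no_types, lifting))
    have "(\<Sum>t=1..n. c t * a i t k) = (\<Sum>t=1..n. (if t = j then a i j k else 0) - (if t = j' then a i j' k else 0))"
      by (rule sum.cong) (auto simp: c_def ne)
    also have "\<dots> = 0" using j j' ak by (simp add: sum_subtractf)
    finally show "(\<Sum>t=1..n. c t * a i t k) = 0" .
  qed
  then have "c j = 0" using li j unfolding lin_indep_family_def by blast
  then show False by (simp add: c_def)
qed

lemma main_perm:
  assumes sh: "comm_semihypergroup n a" and dg: "derived_from_group n a"
    and i: "i \<in> {1..n}" and j: "j \<in> {1..n}"
  shows "image_mset (a i j) (mset_set {1..n}) = image_mset (a 1 j) (mset_set {1..n})"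
proof -
  let ?I = "{1..n::nat}"
  let ?V = "{col n a i j | i j. i \<in> {1..n} \<and> j \<in> {1..n}}"
  have cardV: "card ?V = n" using dg unfolding derived_from_group_def by blast
  have finV: "finite ?V"
  proof -
    have "?V = (\<lambda>(i,j). col n a i j) ` (?I \<times> ?I)" by fastforce
    then show ?thesis by simp
  qed
  have one: "1 \<in> ?I" using i by auto
  have li: "\<And>i. i \<in> ?I \<Longrightarrow> lin_indep_family n (\<lambda>j k. a i j k)"
    using dg unfolding derived_from_group_def by blast
  have full: "\<And>i. i \<in> ?I \<Longrightarrow> col n a i ` ?I = ?V"
  proof -
    fix i assume i: "i \<in> ?I"
    have sub: "col n a i ` ?I \<subseteq> ?V" using i by blast
    have "card (col n a i ` ?I) = n" using card_image[OF col_inj[of n a i, OF li[OF i]]] by simp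
    then show "col n a i ` ?I = ?V" using card_subset_eq[OF finV sub] cardV by simp
  qed
  have "\<forall>t\<in>?I. \<exists>s\<in>?I. col n a 1 s = col n a i t"
  proof
    fix t assume t: "t \<in> ?I"
    have "col n a i t \<in> col n a 1 ` ?I" using full[OF i] full[OF one] t by blast
    then show "\<exists>s\<in>?I. col n a 1 s = col n a i t" by force
  qed
  then obtain \<pi> where \<pi>I: "\<And>t. t \<in> ?I \<Longrightarrow> \<pi> t \<in> ?I"
    and \<pi>c: "\<And>t. t \<in> ?I \<Longrightarrow> col n a 1 (\<pi> t) = col n a i t" by metis
  have inj\<pi>: "inj_on \<pi> ?I"
  proof (rule inj_onI)
    fix x y assume x: "x \<in> ?I" and y: "y \<in> ?I" and "\<pi> x = \<pi> y"
    then have "col n a i x = col n a i y" using \<pi>c by metis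
    then show "x = y" using col_inj[of n a i, OF li[OF i]] x y by (meson inj_onD)
  qed
  have im\<pi>: "\<pi> ` ?I = ?I"
  proof (rule endo_inj_surj[of ?I \<pi>])
    show "\<pi> ` ?I \<subseteq> ?I" using \<pi>I by blast
  qed (simp, rule inj\<pi>)
  have ent: "\<And>t k. t \<in> ?I \<Longrightarrow> k \<in> ?I \<Longrightarrow> a i t k = a 1 (\<pi> t) k"
  proof -
    fix t k assume t: "t \<in> ?I" and k: "k \<in> ?I"
    have "col n a 1 (\<pi> t) k = col n a i t k" using \<pi>c[OF t] by simp
    then show "a i t k = a 1 (\<pi> t) k" using k unfolding col_def by simp
  qed
  have sym: "\<And>x y k. x \<in> ?I \<Longrightarrow> y \<in> ?I \<Longrightarrow> k \<in> ?I \<Longrightarrow> a x y k = a y x k"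
    using sh unfolding comm_semihypergroup_def by blast
  have assoc: "\<And>x y l k. x \<in> ?I \<Longrightarrow> y \<in> ?I \<Longrightarrow> l \<in> ?I \<Longrightarrow> k \<in> ?I \<Longrightarrow>
      (\<Sum>m=1..n. a x y m * a m l k) = (\<Sum>m=1..n. a y l m * a x m k)"
    using sh unfolding comm_semihypergroup_def by blast
  define y where "y = (\<lambda>m'. a 1 j (inv_into ?I \<pi> m'))"
  define c where "c = (\<lambda>m. a 1 (\<pi> j) m - y m)"
  have "\<forall>k\<in>?I. (\<Sum>m=1..n. c m * a 1 m k) = 0"
  proof
    fix k assume k: "k \<in> ?I"
    have "(\<Sum>m=1..n. a i j m * a m 1 k) = (\<Sum>m=1..n. a j 1 m * a i m k)"
      using assoc[OF i j one k] .
    also have "\<dots> = (\<Sum>m=1..n. a 1 j m * a 1 (\<pi> m) k)"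
    proof (rule sum.cong)
      fix m assume m: "m \<in> ?I"
      show "a j 1 m * a i m k = a 1 j m * a 1 (\<pi> m) k"
        using sym[OF j one m] ent[OF m k] by simp
    qed simp
    also have "\<dots> = (\<Sum>m=1..n. (\<lambda>m'. y m' * a 1 m' k) (\<pi> m))"
    proof (rule sum.cong)
      fix m assume m: "m \<in> ?I"
      show "a 1 j m * a 1 (\<pi> m) k = (\<lambda>m'. y m' * a 1 m' k) (\<pi> m)"
        using inv_into_f_f[OF inj\<pi> m] by (simp add: y_def)
    qed simp
    also have "\<dots> = (\<Sum>m'\<in>\<pi> ` ?I. y m' * a 1 m' k)"
      using sum.reindex[OF inj\<pi>, of "\<lambda>m'. y m' * a 1 m' k"] by (simp only: comp_def)
    also have "\<dots> = (\<Sum>m=1..n. y m * a 1 m k)" using im\<pi> by simp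
    finally have e1: "(\<Sum>m=1..n. a i j m * a m 1 k) = (\<Sum>m=1..n. y m * a 1 m k)" .
    have e2: "(\<Sum>m=1..n. a i j m * a m 1 k) = (\<Sum>m=1..n. a 1 (\<pi> j) m * a 1 m k)"
    proof (rule sum.cong)
      fix m assume m: "m \<in> ?I"
      show "a i j m * a m 1 k = a 1 (\<pi> j) m * a 1 m k"
        using ent[OF j m] sym[OF m one k] by simp
    qed simp
    have "(\<Sum>m=1..n. c m * a 1 m k) = (\<Sum>m=1..n. a 1 (\<pi> j) m * a 1 m k) - (\<Sum>m=1..n. y m * a 1 m k)"
      by (simp add: c_def left_diff_distrib sum_subtractf)
    then show "(\<Sum>m=1..n. c m * a 1 m k) = 0" using e1 e2 by simp
  qed
  then have c0: "\<And>m. m \<in> ?I \<Longrightarrow> c m = 0" using li[OF one] unfolding lin_indep_family_def by blast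
  have key: "\<And>m. m \<in> ?I \<Longrightarrow> a i j (\<pi> m) = a 1 j m"
  proof -
    fix m assume m: "m \<in> ?I"
    have "c (\<pi> m) = 0" using c0 \<pi>I[OF m] by blast
    then have "a 1 (\<pi> j) (\<pi> m) = a 1 j m"
      using inv_into_f_f[OF inj\<pi> m] by (simp add: c_def y_def)
    then show "a i j (\<pi> m) = a 1 j m" using ent[OF j \<pi>I[OF m]] by simp
  qed
  have "image_mset (a i j) (mset_set ?I) = image_mset (a i j) (image_mset \<pi> (mset_set ?I))"
    using image_mset_mset_set[OF inj\<pi>] im\<pi> by simp
  also have "\<dots> = image_mset (\<lambda>m. a i j (\<pi> m)) (mset_set ?I)" by (simp add: multiset.map_comp comp_def)
  also have "\<dots> = image_mset (a 1 j) (mset_set ?I)"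
    by (rule image_mset_cong) (simp add: key)
  finally show ?thesis .
qed

theorem corollary1:
  fixes n :: nat and a :: "nat \<Rightarrow> nat \<Rightarrow> nat \<Rightarrow> real"
  assumes "comm_semihypergroup n a"
    and "derived_from_group n a"
  shows "(\<forall>i\<in>{1..n}. \<forall>j\<in>{1..n}. \<forall>k\<in>{1..n}. \<forall>l\<in>{1..n}.
            image_mset (a i j) (mset_set {1..n}) = image_mset (a k l) (mset_set {1..n}))
         \<and> card {a i j k | i j k. i \<in> {1..n} \<and> j \<in> {1..n} \<and> k \<in> {1..n}} \<le> n"
proof -
  let ?I = "{1..n::nat}"
  have sym: "\<And>x y k. x \<in> ?I \<Longrightarrow> y \<in> ?I \<Longrightarrow> k \<in> ?I \<Longrightarrow> a x y k = a y x k"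
    using assms(1) unfolding comm_semihypergroup_def by blast
  have all: "\<And>i j. i \<in> ?I \<Longrightarrow> j \<in> ?I \<Longrightarrow>
      image_mset (a i j) (mset_set ?I) = image_mset (a 1 1) (mset_set ?I)"
  proof -
    fix i j assume i: "i \<in> ?I" and j: "j \<in> ?I"
    have one: "1 \<in> ?I" using i by auto
    have "image_mset (a i j) (mset_set ?I) = image_mset (a 1 j) (mset_set ?I)"
      using main_perm[OF assms i j] .
    also have "\<dots> = image_mset (a j 1) (mset_set ?I)"
      by (rule image_mset_cong) (metis sym one j finite_atLeastAtMost elem_mset_set)
    also have "\<dots> = image_mset (a 1 1) (mset_set ?I)"
      using main_perm[OF assms j one] .
    finally show "image_mset (a i j) (mset_set ?I) = image_mset (a 1 1) (mset_set ?I)" .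
  qed
  have sub: "{a i j k | i j k. i \<in> ?I \<and> j \<in> ?I \<and> k \<in> ?I} \<subseteq> a 1 1 ` ?I"
  proof
    fix x assume "x \<in> {a i j k | i j k. i \<in> ?I \<and> j \<in> ?I \<and> k \<in> ?I}"
    then obtain i j k where i: "i \<in> ?I" and j: "j \<in> ?I" and k: "k \<in> ?I" and x: "x = a i j k" by blast
    have "x \<in> set_mset (image_mset (a i j) (mset_set ?I))" using k x by simp
    also have "\<dots> = set_mset (image_mset (a 1 1) (mset_set ?I))" using all[OF i j] by (rule arg_cong)
    also have "\<dots> = a 1 1 ` ?I" by simp
    finally show "x \<in> a 1 1 ` ?I" .
  qed
  have "card {a i j k | i j k. i \<in> ?I \<and> j \<in> ?I \<and> k \<in> ?I} \<le> card (a 1 1 ` ?I)"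
    by (rule card_mono[OF _ sub]) simp
  also have "\<dots> \<le> n" using card_image_le[of ?I "a 1 1"] by simp
  finally have c: "card {a i j k | i j k. i \<in> ?I \<and> j \<in> ?I \<and> k \<in> ?I} \<le> n" .
  have "\<forall>i\<in>?I. \<forall>j\<in>?I. \<forall>k\<in>?I. \<forall>l\<in>?I.
            image_mset (a i j) (mset_set ?I) = image_mset (a k l) (mset_set ?I)"
    using all by metis
  then show ?thesis using c by blast
qed

end
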